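(* Let $U\subset V\subset\mathbb R^2$ be compact star-shaped domains (origin in the interior) with smooth boundaries, and assume $V$ is convex. Then $\mathrm{sys}(\mathbb T^2\times\partial U)\le\mathrm{sys}(\mathbb T^2\times\partial V)$.
   Context: $\mathbb T^2=\mathbb R^2/\mathbb Z^2$, $T^*\mathbb T^2=\mathbb T^2\times\mathbb R^2$, $\lambda_{\rm can}=p_1dq_1+p_2dq_2$. For a compact star-shaped domain $A\subset\mathbb R^2$ with smooth boundary, $\mathrm{sys}(\mathbb T^2\times\partial A)$ is the minimal action (period) of a closed Reeb orbit of the contact form $\lambda_{\rm can}|_{\mathbb T^2\times\partial A}$. *)

theory Defs
  imports "HOL-Analysis.Analysis"
begin

text \<open>Points of R^2 are pairs of reals; the cotangent bundle T^*T^2 is lifted to its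
  universal cover R^2 x R^2 with coordinates (q, p), q = (q1,q2), p = (p1,p2).\<close>

primrec C_k :: "nat \<Rightarrow> ('a::real_normed_vector \<Rightarrow> real) \<Rightarrow> bool" where
  "C_k 0 f = continuous_on UNIV f"
| "C_k (Suc k) f = ((\<forall>x. f differentiable (at x)) \<and>
                     (\<forall>v. C_k k (\<lambda>x. frechet_derivative f (at x) v)))"

definition smooth_fun :: "('a::real_normed_vector \<Rightarrow> real) \<Rightarrow> bool" where
  "smooth_fun f \<longleftrightarrow> (\<forall>k. C_k k f)"

text \<open>Compact star-shaped domain (w.r.t. the origin, origin in the interior) with smooth
  boundary; the boundary is cut out by a smooth defining function H and is transverse to
  the radial vector field (so that the restricted Liouville form is contact).\<close>
definition star_shaped_smooth_domain :: "(real \<times> real) set \<Rightarrow> bool" where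
  "star_shaped_smooth_domain A \<longleftrightarrow>
     compact A \<and> (0::real\<times>real) \<in> interior A \<and>
     (\<forall>x\<in>A. closed_segment 0 x \<subseteq> A) \<and>
     (\<exists>H :: real \<times> real \<Rightarrow> real. smooth_fun H \<and> A = {p. H p \<le> 0} \<and>
        (\<forall>p. H p = 0 \<longrightarrow> frechet_derivative H (at p) p > 0))"

definition tangent_space :: "(real \<times> real) set \<Rightarrow> real \<times> real \<Rightarrow> (real \<times> real) set" where
  "tangent_space S p = {v. \<exists>c e. e > 0 \<and> c 0 = p \<and> (\<forall>t. \<bar>t\<bar> < e \<longrightarrow> c t \<in> S) \<and>
                               (c has_vector_derivative v) (at 0)}"

text \<open>A closed Reeb orbit of period T of lambda_can = p1 dq1 + p2 dq2 restricted to
  T^2 x frontier A, written as a curve gamma = (q,p) in the universal cover R^2 x R^2: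
  gamma stays on R^2 x frontier A, closes up modulo Z^2 x 0 after time T,
  lambda(gamma') = 1 and gamma' lies in the kernel of d lambda = dp1/\dq1 + dp2/\dq2
  restricted to the tangent space R^2 x T_p(frontier A).\<close>
definition closed_reeb_orbit ::
  "(real \<times> real) set \<Rightarrow> real \<Rightarrow> (real \<Rightarrow> (real \<times> real) \<times> (real \<times> real)) \<Rightarrow> bool" where
  "closed_reeb_orbit A T \<gamma> \<longleftrightarrow>
     T > 0 \<and>
     (\<forall>t. snd (\<gamma> t) \<in> frontier A) \<and>
     (\<forall>t. snd (\<gamma> (t + T)) = snd (\<gamma> t) \<and> fst (\<gamma> (t + T)) - fst (\<gamma> t) \<in> \<int> \<times> \<int>) \<and>
     (\<forall>t. \<exists>q' p'. (\<gamma> has_vector_derivative (q', p')) (at t) \<and>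
          inner (snd (\<gamma> t)) q' = 1 \<and>
          (\<forall>a b. b \<in> tangent_space (frontier A) (snd (\<gamma> t)) \<longrightarrow>
                 inner p' a - inner b q' = 0))"

definition sys :: "(real \<times> real) set \<Rightarrow> real" where
  "sys A = Inf {T. \<exists>\<gamma>. closed_reeb_orbit A T \<gamma>}"

end

theory Submission
  imports Defs
begin


lemma inner2: "inner (x::real\<times>real) y = fst x * fst y + snd x * snd y"
  by (cases x; cases y) (simp add: inner_Pair)

lemma lin2:
  assumes "linear (D :: real\<times>real \<Rightarrow> real)"
  shows "D x = fst x * D (1,0) + snd x * D (0,1)"
proof -
  have "x = fst x *\<^sub>R (1,0) + snd x *\<^sub>R (0,1)" by (cases x) simp
  hence "D x = D (fst x *\<^sub>R (1,0) + snd x *\<^sub>R (0,1))" by simp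
  also have "\<dots> = D (fst x *\<^sub>R (1,0)) + D (snd x *\<^sub>R (0,1))" by (rule linear_add[OF assms])
  also have "\<dots> = fst x * D (1,0) + snd x * D (0,1)"
    by (simp only: linear_scale[OF assms] real_scaleR_def)
  finally show ?thesis .
qed

lemma frontier_H:
  fixes H :: "real\<times>real \<Rightarrow> real"
  assumes AH: "A = {p. H p \<le> 0}" and Hc: "continuous_on UNIV H" and pF: "p \<in> frontier A"
  shows "H p = 0"
proof -
  have cl: "closed A" unfolding AH by (intro closed_Collect_le Hc continuous_on_const)
  hence "p \<in> A" using pF by (simp add: frontier_def)
  hence le: "H p \<le> 0" using AH by simp
  have "open {p. H p < 0}" by (intro open_Collect_less Hc continuous_on_const)
  moreover have "{p. H p < 0} \<subseteq> A" using AH by auto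
  ultimately have "{p. H p < 0} \<subseteq> interior A" by (simp add: interior_maximal)
  moreover have "p \<notin> interior A" using pF by (simp add: frontier_def)
  ultimately show ?thesis using le by force
qed

lemma convex_grad:
  fixes H :: "real\<times>real \<Rightarrow> real"
  assumes cv: "convex A" and AH: "A = {p. H p \<le> 0}" and H0: "H p0 = 0"
    and dH: "(H has_derivative D) (at p0)" and pA: "p0 \<in> A" and vA: "v \<in> A"
  shows "D v \<le> D p0"
proof (rule ccontr)
  assume "\<not> D v \<le> D p0"
  have lin: "linear D" using dH has_derivative_linear by blast
  have pos: "D (v - p0) > 0" using \<open>\<not> D v \<le> D p0\<close> lin by (simp add: linear_diff)
  have "((\<lambda>s. H (p0 + s *\<^sub>R (v - p0))) has_derivative (\<lambda>s. D (s *\<^sub>R (v - p0)))) (at 0)"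
    by (rule has_derivative_compose[where f="\<lambda>s. p0 + s *\<^sub>R (v - p0)", OF _ ], 
        auto intro!: derivative_eq_intros simp: dH)
  moreover have "(\<lambda>s. D (s *\<^sub>R (v - p0))) = (*) (D (v - p0))"
    using lin by (auto simp: linear_scale mult.commute)
  ultimately have "((\<lambda>s. H (p0 + s *\<^sub>R (v - p0))) has_real_derivative D (v - p0)) (at 0)"
    by (simp add: has_field_derivative_def)
  from DERIV_pos_inc_right[OF this pos] obtain d where d: "d > 0"
    "\<forall>h>0. h < d \<longrightarrow> H (p0 + 0 *\<^sub>R (v - p0)) < H (p0 + (0 + h) *\<^sub>R (v - p0))" by blast
  define h where "h = min (d/2) 1"
  have h: "h > 0" "h < d" "h \<le> 1" using d by (auto simp: h_def)
  have "p0 + h *\<^sub>R (v - p0) = (1 - h) *\<^sub>R p0 + h *\<^sub>R v" by (simp add: algebra_simps)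
  also have "\<dots> \<in> A" using cv pA vA h by (intro convexD) auto
  finally have "H (p0 + h *\<^sub>R (v - p0)) \<le> 0" using AH by simp
  moreover have "H (p0 + h *\<^sub>R (v - p0)) > 0" using d h H0 by fastforce
  ultimately show False by simp
qed




lemma orbit_exists:
  assumes cA: "compact A" and iA: "0 \<in> interior A" and kZ: "k \<in> \<int> \<times> \<int>" and k0: "k \<noteq> 0"
  obtains u0 \<gamma> where "u0 \<in> A" "\<forall>u\<in>A. inner u k \<le> inner u0 k"
     "closed_reeb_orbit A (inner u0 k) \<gamma>"
proof -
  have "A \<noteq> {}" using iA interior_subset by blast
  moreover have "compact ((\<lambda>u. inner u k) ` A)"
    by (intro compact_continuous_image cA continuous_intros)
  ultimately obtain m where "m \<in> (\<lambda>u. inner u k) ` A" "\<forall>t\<in>(\<lambda>u. inner u k) ` A. t \<le> m"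
    using compact_attains_sup by (metis image_is_empty)
  then obtain u0 where u0A: "u0 \<in> A" and umax: "\<forall>u\<in>A. inner u k \<le> inner u0 k" by auto
  have nk: "norm k > 0" using k0 by simp
  obtain r where r: "r > 0" "ball 0 r \<subseteq> A" using iA by (meson mem_interior)
  define s where "s = r / (2 * norm k)"
  have s0: "s > 0" using r nk by (simp add: s_def)
  have "norm (s *\<^sub>R k) < r" using r nk by (simp add: s_def)
  hence "s *\<^sub>R k \<in> A" using r by auto
  hence "inner (s *\<^sub>R k) k \<le> inner u0 k" using umax by blast
  moreover have "inner (s *\<^sub>R k) k > 0" using s0 k0 by simp
  ultimately have c0: "inner u0 k > 0" by linarith
  define c where "c = inner u0 k"
  have notint: "u0 \<notin> interior A"
  proof
    assume "u0 \<in> interior A"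
    then obtain r where r: "r > 0" "ball u0 r \<subseteq> A" by (meson mem_interior)
    define s where "s = r / (2 * norm k)"
    have s0: "s > 0" using r nk by (simp add: s_def)
    have "dist u0 (u0 + s *\<^sub>R k) < r" using r nk by (simp add: s_def dist_norm)
    hence "u0 + s *\<^sub>R k \<in> A" using r by auto
    hence "inner (u0 + s *\<^sub>R k) k \<le> inner u0 k" using umax by blast
    moreover have "inner (s *\<^sub>R k) k > 0" using s0 k0 by simp
    ultimately show False by (simp add: inner_add_left)
  qed
  have clA: "closure A = A" using cA compact_imp_closed closure_closed by blast
  have u0F: "u0 \<in> frontier A" using u0A notint clA by (simp add: frontier_def)
  have tang: "inner b k = 0" if bT: "b \<in> tangent_space (frontier A) u0" for b
  proof -
    obtain cc e where ce: "e > 0" "cc 0 = u0" "\<forall>t. \<bar>t\<bar> < e \<longrightarrow> cc t \<in> frontier A"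
       "(cc has_vector_derivative b) (at 0)"
      using bT unfolding tangent_space_def by blast
    have fA: "frontier A \<subseteq> A" using clA by (simp add: frontier_def)
    have d: "((\<lambda>t. inner (cc t) k) has_real_derivative inner b k) (at 0)"
    proof -
      have "(cc has_derivative (\<lambda>x. x *\<^sub>R b)) (at 0)" using ce(4) by (simp add: has_vector_derivative_def)
      hence "((\<lambda>t. inner (cc t) k) has_derivative (\<lambda>x. inner (x *\<^sub>R b) k)) (at 0)"
        by (rule has_derivative_inner_left)
      moreover have "(\<lambda>x. x * (b \<bullet> k)) = (*) (b \<bullet> k)" by (auto simp: mult.commute)
      ultimately show ?thesis by (simp add: has_field_derivative_def)
    qed
    show ?thesis
      by (rule DERIV_local_max[OF d ce(1)]) (use ce umax fA in auto)
  qed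
  define \<gamma> where "\<gamma> = (\<lambda>t::real. ((t / c) *\<^sub>R k, u0))"
  have "closed_reeb_orbit A c \<gamma>"
    unfolding closed_reeb_orbit_def
  proof (intro conjI allI)
    show "0 < c" using c0 c_def by simp
    fix t
    show "snd (\<gamma> t) \<in> frontier A" using u0F by (simp add: \<gamma>_def)
    show "snd (\<gamma> (t + c)) = snd (\<gamma> t)" by (simp add: \<gamma>_def)
    have "((t + c) / c) *\<^sub>R k - (t / c) *\<^sub>R k = ((t + c) / c - t / c) *\<^sub>R k"
      by (simp add: scaleR_diff_left)
    also have "(t + c) / c - t / c = 1" using c0 c_def by (simp add: field_simps)
    finally show "fst (\<gamma> (t + c)) - fst (\<gamma> t) \<in> \<int> \<times> \<int>" using kZ by (simp add: \<gamma>_def)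
    have der: "(\<gamma> has_vector_derivative ((1/c) *\<^sub>R k, 0)) (at t)"
      unfolding \<gamma>_def using c0 c_def
      by (auto intro!: derivative_eq_intros)
    show "\<exists>q' p'. (\<gamma> has_vector_derivative (q', p')) (at t) \<and>
          inner (snd (\<gamma> t)) q' = 1 \<and>
          (\<forall>a b. b \<in> tangent_space (frontier A) (snd (\<gamma> t)) \<longrightarrow>
                 inner p' a - inner b q' = 0)"
      using der c0 tang c_def by (intro exI[of _ "(1/c) *\<^sub>R k"] exI[of _ 0]) (auto simp: \<gamma>_def c_def)
  qed
  thus ?thesis using that u0A umax c_def by blast
qed



lemma tangent_exists:
  fixes H :: "real\<times>real \<Rightarrow> real"
  assumes cA: "compact A" and AH: "A = {p. H p \<le> 0}" and zA: "0 \<in> A"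
    and H0: "H p0 = 0" and pA: "p0 \<in> A"
    and dH: "(H has_derivative D) (at p0)" and a0: "D p0 > 0"
    and sup: "\<forall>v\<in>A. D v \<le> D p0" and Dw: "D w = 0"
  shows "w \<in> tangent_space (frontier A) p0"
proof -
  have lin: "linear D" using dH has_derivative_linear by blast
  define a where "a = D p0"
  have clA: "closed A" using cA compact_imp_closed by blast
  define S where "S = (\<lambda>x. {s::real. 0 \<le> s \<and> s *\<^sub>R x \<in> A})"
  define L where "L = (\<lambda>x. Sup (S x))"
  have Sprops: "L x \<in> S x \<and> L x \<le> 1 \<and> (\<forall>s\<in>S x. s \<le> L x) \<and> L x *\<^sub>R x \<in> frontier A"
    if Dx: "D x = a" for x
  proof -
    have ub: "s \<le> 1" if "s \<in> S x" for s
    proof -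
      have "D (s *\<^sub>R x) \<le> a" using sup that a_def by (auto simp: S_def)
      hence "s * a \<le> 1 * a" using lin Dx by (simp add: linear_scale)
      thus ?thesis using a0 a_def by simp
    qed
    have bdd: "bdd_above (S x)" by (rule bdd_aboveI[of _ 1]) (rule ub)
    have ne: "S x \<noteq> {}" using zA by (auto simp: S_def intro!: exI[of _ 0])
    have "closed ((\<lambda>s::real. s *\<^sub>R x) -` A)"
      by (intro closed_vimage clA continuous_intros)
    hence "closed {s::real. s *\<^sub>R x \<in> A}" by (simp add: vimage_def)
    hence cl: "closed (S x)" unfolding S_def
      using closed_Int[OF closed_atLeast[of 0]] by (simp add: Collect_conj_eq atLeast_def)
    have LS: "L x \<in> S x" unfolding L_def by (rule closed_contains_Sup[OF ne bdd cl])
    have upp: "\<forall>s\<in>S x. s \<le> L x" using bdd unfolding L_def by (auto intro: cSup_upper)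
    have x0: "x \<noteq> 0" using Dx a0 a_def lin linear_0 by fastforce
    have "L x *\<^sub>R x \<notin> interior A"
    proof
      assume "L x *\<^sub>R x \<in> interior A"
      then obtain r where r: "r > 0" "ball (L x *\<^sub>R x) r \<subseteq> A" by (meson mem_interior)
      define s where "s = r / (2 * norm x)"
      have s0: "s > 0" using r x0 by (simp add: s_def)
      have "dist (L x *\<^sub>R x) ((L x + s) *\<^sub>R x) = s * norm x"
        using s0 by (simp add: dist_norm algebra_simps)
      also have "\<dots> < r" using r x0 by (simp add: s_def)
      finally have "(L x + s) *\<^sub>R x \<in> A" using r by auto
      hence "L x + s \<in> S x" using LS s0 by (simp add: S_def)
      thus False using upp s0 by force
    qed
    hence "L x *\<^sub>R x \<in> frontier A" using LS clA by (simp add: frontier_def S_def)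
    thus ?thesis using LS upp ub by blast
  qed
  define ll where "ll = (\<lambda>t::real. L (p0 + t *\<^sub>R w))"
  have Dl: "D (p0 + t *\<^sub>R w) = a" for t using lin Dw a_def by (simp add: linear_add linear_scale)
  have l0: "ll 0 = 1"
  proof -
    have "1 \<in> S p0" using pA by (simp add: S_def)
    thus ?thesis using Sprops[of p0] a_def by (force simp: ll_def)
  qed
  have key: "\<exists>\<delta>>0. \<forall>y. \<bar>y\<bar> < \<delta> \<longrightarrow> 1 - \<epsilon> * \<bar>y\<bar> \<le> ll y" if e0: "\<epsilon> > 0" for \<epsilon>
  proof -
    define C where "C = \<epsilon> * norm p0 + norm w + 1"
    have C0: "C > 0" using e0 by (simp add: C_def add_nonneg_pos)
    define \<eta> where "\<eta> = \<epsilon> * a / (2 * C)"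
    have eta0: "\<eta> > 0" using e0 C0 a0 a_def by (simp add: \<eta>_def)
    obtain d where d: "d > 0" "\<forall>z. norm (z - p0) < d \<longrightarrow> norm (H z - H p0 - D (z - p0)) \<le> \<eta> * norm (z - p0)"
      using dH eta0 unfolding has_derivative_at_alt by blast
    define \<delta> where "\<delta> = min (d / C) (1 / \<epsilon>)"
    have dl0: "\<delta> > 0" using d C0 e0 by (simp add: \<delta>_def)
    show ?thesis
    proof (intro exI[of _ \<delta>] conjI allI impI dl0)
      fix y :: real assume y: "\<bar>y\<bar> < \<delta>"
      define s where "s = 1 - \<epsilon> * \<bar>y\<bar>"
      have ey: "\<epsilon> * \<bar>y\<bar> < 1" using y e0 by (simp add: \<delta>_def field_simps)
      have s01: "0 \<le> s" "s \<le> 1" using ey e0 by (auto simp: s_def)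
      define z where "z = s *\<^sub>R (p0 + y *\<^sub>R w)"
      have zp: "z - p0 = (- (\<epsilon> * \<bar>y\<bar>)) *\<^sub>R p0 + (s * y) *\<^sub>R w"
        by (simp add: z_def s_def algebra_simps)
      have "norm (z - p0) \<le> norm ((- (\<epsilon> * \<bar>y\<bar>)) *\<^sub>R p0) + norm ((s * y) *\<^sub>R w)"
        unfolding zp by (rule norm_triangle_ineq)
      also have "\<dots> = \<epsilon> * \<bar>y\<bar> * norm p0 + s * \<bar>y\<bar> * norm w"
        using e0 s01 by (simp add: abs_mult)
      also have "\<dots> \<le> \<epsilon> * \<bar>y\<bar> * norm p0 + \<bar>y\<bar> * norm w"
        using s01 by (simp add: mult_right_le_one_le mult_left_le_one_le mult_mono)
      also have "\<dots> \<le> C * \<bar>y\<bar>" by (simp add: C_def algebra_simps)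
      finally have nz: "norm (z - p0) \<le> C * \<bar>y\<bar>" .
      have "C * \<bar>y\<bar> < d" using y C0 by (simp add: \<delta>_def field_simps)
      hence nzd: "norm (z - p0) < d" using nz by linarith
      have Dz: "D (z - p0) = - (\<epsilon> * \<bar>y\<bar>) * a"
        unfolding zp using lin Dw a_def by (simp only: linear_add[OF lin] linear_scale[OF lin]) simp
      have "norm (H z - H p0 - D (z - p0)) \<le> \<eta> * norm (z - p0)" using d nzd by blast
      hence "H z - H p0 - D (z - p0) \<le> \<eta> * norm (z - p0)" by simp
      moreover have "\<eta> * norm (z - p0) \<le> \<eta> * (C * \<bar>y\<bar>)" using nz eta0 by (simp add: mult_left_mono)
      ultimately have "H z \<le> - (\<epsilon> * \<bar>y\<bar>) * a + \<eta> * (C * \<bar>y\<bar>)"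
        using H0 Dz by linarith
      also have "\<eta> * (C * \<bar>y\<bar>) = \<epsilon> * \<bar>y\<bar> * a / 2" using C0 by (simp add: \<eta>_def field_simps)
      finally have Hz: "H z \<le> - (\<epsilon> * \<bar>y\<bar>) * a + \<epsilon> * \<bar>y\<bar> * a / 2" .
      have "\<epsilon> * \<bar>y\<bar> * a \<ge> 0" using e0 a0 a_def by simp
      moreover have "- (\<epsilon> * \<bar>y\<bar>) * a + \<epsilon> * \<bar>y\<bar> * a / 2 = - (\<epsilon> * \<bar>y\<bar> * a) / 2" by simp
      ultimately have "H z \<le> 0" using Hz by linarith
      hence "s \<in> S (p0 + y *\<^sub>R w)" using AH s01 by (simp add: S_def z_def)
      thus "1 - \<epsilon> * \<bar>y\<bar> \<le> ll y" using Sprops[OF Dl] by (simp add: ll_def s_def)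
    qed
  qed
  have dl: "(ll has_real_derivative 0) (at 0)"
    unfolding has_field_derivative_iff LIM_eq
  proof (intro allI impI)
    fix r :: real assume r: "r > 0"
    obtain \<delta> where dl: "\<delta> > 0" "\<forall>y. \<bar>y\<bar> < \<delta> \<longrightarrow> 1 - (r/2) * \<bar>y\<bar> \<le> ll y" using key[of "r/2"] r by auto
    show "\<exists>s>0. \<forall>x. x \<noteq> 0 \<and> norm (x - 0) < s \<longrightarrow> norm ((ll x - ll 0) / (x - 0) - 0) < r"
    proof (intro exI[of _ \<delta>] conjI allI impI dl(1))
      fix x :: real assume x: "x \<noteq> 0 \<and> norm (x - 0) < \<delta>"
      have "ll x \<le> 1" using Sprops[OF Dl] by (simp add: ll_def)
      moreover have "1 - (r/2) * \<bar>x\<bar> \<le> ll x" using dl x by simp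
      ultimately have "\<bar>ll x - 1\<bar> \<le> (r/2) * \<bar>x\<bar>" by simp
      hence "\<bar>ll x - 1\<bar> / \<bar>x\<bar> \<le> r/2" using x by (simp add: field_simps)
      moreover have "norm ((ll x - ll 0) / (x - 0) - 0) = \<bar>ll x - 1\<bar> / \<bar>x\<bar>" using l0 by (simp add: abs_divide)
      ultimately show "norm ((ll x - ll 0) / (x - 0) - 0) < r" using r by linarith
    qed
  qed
  define cc where "cc = (\<lambda>t. ll t *\<^sub>R (p0 + t *\<^sub>R w))"
  have "(cc has_vector_derivative w) (at 0)"
  proof -
    have d1: "((\<lambda>x. p0 + x *\<^sub>R w) has_vector_derivative w) (at 0)"
      by (auto intro!: derivative_eq_intros)
    have "(cc has_vector_derivative (ll 0 *\<^sub>R w + 0 *\<^sub>R (p0 + 0 *\<^sub>R w))) (at 0)"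
      unfolding cc_def using has_vector_derivative_scaleR[OF dl d1] by simp
    thus ?thesis using l0 by simp
  qed
  moreover have "cc 0 = p0" using l0 by (simp add: cc_def)
  moreover have "\<forall>t. \<bar>t\<bar> < 1 \<longrightarrow> cc t \<in> frontier A"
    using Sprops[OF Dl] by (simp add: cc_def ll_def L_def)
  ultimately show ?thesis unfolding tangent_space_def by (intro CollectI exI[of _ cc] exI[of _ 1]) auto
qed



lemma alg:
  fixes G1 G2 p1 p2 v1 v2 q1 q2 :: real
  assumes a: "p1*G1+p2*G2 > 0" and b: "v1*G1+v2*G2 \<le> p1*G1+p2*G2" and c: "p1*q1+p2*q2 = 1"
    and d: "-G2*q1 + G1*q2 = 0"
  shows "v1*q1+v2*q2 \<le> 1"
proof -
  define N where "N = G1^2 + G2^2"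
  have N0: "N > 0"
  proof -
    have "G1 \<noteq> 0 \<or> G2 \<noteq> 0" using a by auto
    thus ?thesis by (auto simp: N_def add_pos_nonneg add_nonneg_pos)
  qed
  define \<mu> where "\<mu> = (q1*G1+q2*G2)/N"
  have "q1 * N = (q1*G1+q2*G2) * G1" using d by (simp add: N_def power2_eq_square algebra_simps)
  hence q1: "q1 = \<mu> * G1" using N0 by (simp add: \<mu>_def field_simps)
  have "q2 * N = (q1*G1+q2*G2) * G2" using d by (simp add: N_def power2_eq_square algebra_simps)
  hence q2: "q2 = \<mu> * G2" using N0 by (simp add: \<mu>_def field_simps)
  have "\<mu> * (p1*G1+p2*G2) = 1" using c q1 q2 by (simp add: algebra_simps)
  hence mu0: "\<mu> > 0" using a by (metis zero_less_mult_pos2 zero_less_one)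
  have "v1*q1+v2*q2 = \<mu> * (v1*G1+v2*G2)" using q1 q2 by (simp add: algebra_simps)
  also have "\<dots> \<le> \<mu> * (p1*G1+p2*G2)" using b mu0 by (simp add: mult_left_mono)
  finally show ?thesis using \<open>\<mu> * (p1*G1+p2*G2) = 1\<close> by simp
qed

lemma inner_fst_deriv:
  assumes "(g has_vector_derivative (q, p)) (at t)"
  shows "((\<lambda>t. inner v (fst (g t))) has_real_derivative inner v q) (at t)"
proof -
  have "(g has_derivative (\<lambda>x. x *\<^sub>R (q, p))) (at t)" using assms by (simp add: has_vector_derivative_def)
  hence "((\<lambda>t. fst (g t)) has_derivative (\<lambda>x. fst (x *\<^sub>R (q, p)))) (at t)" by (rule has_derivative_fst)
  hence "((\<lambda>t. inner v (fst (g t))) has_derivative (\<lambda>x. inner v (fst (x *\<^sub>R (q, p))))) (at t)"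
    by (rule has_derivative_inner_right)
  moreover have "(\<lambda>x. inner v (fst (x *\<^sub>R (q, p)))) = (*) (inner v q)" by (auto simp: mult.commute)
  ultimately show ?thesis by (simp add: has_field_derivative_def)
qed

lemma period_bound:
  assumes sV: "star_shaped_smooth_domain V" and cv: "convex V" and orb: "closed_reeb_orbit V T \<gamma>"
  shows "\<exists>k\<in>\<int>\<times>\<int>. k \<noteq> 0 \<and> (\<forall>v\<in>V. inner v k \<le> T)"
proof -
  obtain H where cV: "compact V" and iV: "0 \<in> interior V" and sH: "smooth_fun H"
    and VH: "V = {p. H p \<le> 0}" and Hpos: "\<forall>p. H p = 0 \<longrightarrow> frechet_derivative H (at p) p > 0"
    using sV unfolding star_shaped_smooth_domain_def by blast
  have Hd: "\<forall>x. H differentiable (at x)" using sH unfolding smooth_fun_def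
    by (metis C_k.simps(2))
  have Hc: "continuous_on UNIV H" using sH unfolding smooth_fun_def by (metis C_k.simps(1))
  have T0: "T > 0" and fr: "\<forall>t. snd (\<gamma> t) \<in> frontier V"
    and clo: "\<forall>t. snd (\<gamma> (t + T)) = snd (\<gamma> t) \<and> fst (\<gamma> (t + T)) - fst (\<gamma> t) \<in> \<int> \<times> \<int>"
    and der: "\<forall>t. \<exists>q' p'. (\<gamma> has_vector_derivative (q', p')) (at t) \<and>
          inner (snd (\<gamma> t)) q' = 1 \<and>
          (\<forall>a b. b \<in> tangent_space (frontier V) (snd (\<gamma> t)) \<longrightarrow>
                 inner p' a - inner b q' = 0)"
    using orb unfolding closed_reeb_orbit_def by blast+
  obtain Q Pd where QP: "\<And>t. (\<gamma> has_vector_derivative (Q t, Pd t)) (at t) \<and>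
          inner (snd (\<gamma> t)) (Q t) = 1 \<and>
          (\<forall>a b. b \<in> tangent_space (frontier V) (snd (\<gamma> t)) \<longrightarrow>
                 inner (Pd t) a - inner b (Q t) = 0)"
    using der by metis
  have tan0: "0 \<in> tangent_space (frontier V) p" if "p \<in> frontier V" for p
    unfolding tangent_space_def using that
    by (intro CollectI exI[of _ "\<lambda>_. p"] exI[of _ 1]) auto
  have Pd0: "Pd t = 0" for t
  proof -
    have "inner (Pd t) (Pd t) - inner 0 (Q t) = 0" using QP[of t] tan0 fr by blast
    thus ?thesis by simp
  qed
  have "((\<lambda>t. snd (\<gamma> t)) has_vector_derivative 0) (at t within UNIV)" for t
  proof -
    have "(\<gamma> has_derivative (\<lambda>x. x *\<^sub>R (Q t, Pd t))) (at t)" using QP[of t] by (simp add: has_vector_derivative_def)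
    hence "((\<lambda>t. snd (\<gamma> t)) has_derivative (\<lambda>x. snd (x *\<^sub>R (Q t, Pd t)))) (at t)" by (rule has_derivative_snd)
    thus ?thesis using Pd0 by (simp add: has_vector_derivative_def)
  qed
  then obtain p0 where P0: "\<And>t. snd (\<gamma> t) = p0"
    using has_vector_derivative_zero_constant[of UNIV "\<lambda>t. snd (\<gamma> t)"] by auto
  have p0F: "p0 \<in> frontier V" using fr P0 by metis
  have clV: "closed V" using cV compact_imp_closed by blast
  have p0V: "p0 \<in> V" using p0F clV by (simp add: frontier_def)
  have zV: "0 \<in> V" using iV interior_subset by blast
  define D where "D = frechet_derivative H (at p0)"
  have dH: "(H has_derivative D) (at p0)" using Hd frechet_derivative_works D_def by blast
  have lin: "linear D" using dH has_derivative_linear by blast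
  have H0: "H p0 = 0" by (rule frontier_H[OF VH Hc p0F])
  have a0: "D p0 > 0" using Hpos H0 D_def by blast
  have sup: "\<forall>v\<in>V. D v \<le> D p0" using convex_grad[OF cv VH H0 dH p0V] by blast
  define w where "w = (- D (0,1), D (1,0))"
  have Dw: "D w = 0" using lin2[OF lin, of w] by (simp add: w_def)
  have wT: "w \<in> tangent_space (frontier V) p0"
    by (rule tangent_exists[OF cV VH zV H0 p0V dH a0 sup Dw])
  have Qb: "inner v (Q t) \<le> 1" if vV: "v \<in> V" for v t
  proof -
    have "inner (Pd t) 0 - inner w (Q t) = 0" using QP[of t] wT P0 by metis
    hence o: "inner w (Q t) = 0" by simp
    have one: "inner p0 (Q t) = 1" using QP[of t] P0 by metis
    have "D v \<le> D p0" using sup vV by blast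
    hence b: "fst v * D (1,0) + snd v * D (0,1) \<le> fst p0 * D (1,0) + snd p0 * D (0,1)"
      using lin2[OF lin] by metis
    have a: "fst p0 * D (1,0) + snd p0 * D (0,1) > 0" using a0 lin2[OF lin] by metis
    show ?thesis unfolding inner2
      by (rule alg[OF a b]) (use one o in \<open>auto simp: inner2 w_def\<close>)
  qed
  define k where "k = fst (\<gamma> (0 + T)) - fst (\<gamma> 0)"
  have kZ: "k \<in> \<int> \<times> \<int>" using clo k_def by blast
  have vb: "inner v k \<le> T" if vV: "v \<in> V" for v
  proof -
    have "(\<lambda>t. inner v (fst (\<gamma> t)) - t) T \<le> (\<lambda>t. inner v (fst (\<gamma> t)) - t) 0"
    proof (rule DERIV_nonpos_imp_nonincreasing[where f="\<lambda>t. inner v (fst (\<gamma> t)) - t"])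
      show "0 \<le> T" using T0 by simp
      show "\<exists>y. ((\<lambda>t. inner v (fst (\<gamma> t)) - t) has_real_derivative y) (at x) \<and> y \<le> 0"
        if "0 \<le> x" "x \<le> T" for x
        using Qb[OF vV, of x] inner_fst_deriv[OF QP[of x, THEN conjunct1], of v]
        by (intro exI[of _ "inner v (Q x) - 1"]) (auto intro!: derivative_eq_intros)
    qed
    thus ?thesis by (simp add: k_def inner_diff_right)
  qed
  have "(\<lambda>t. inner p0 (fst (\<gamma> t)) - t) 0 \<le> (\<lambda>t. inner p0 (fst (\<gamma> t)) - t) T"
  proof (rule DERIV_nonneg_imp_nondecreasing[where f="\<lambda>t. inner p0 (fst (\<gamma> t)) - t"])
    show "0 \<le> T" using T0 by simp
    show "\<exists>y. ((\<lambda>t. inner p0 (fst (\<gamma> t)) - t) has_real_derivative y) (at x) \<and> 0 \<le> y"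
      if "0 \<le> x" "x \<le> T" for x
    proof -
    have one: "inner p0 (Q x) = 1" using QP[of x] P0 by metis
    show ?thesis
      using one inner_fst_deriv[OF QP[of x, THEN conjunct1], of p0]
      by (intro exI[of _ "inner p0 (Q x) - 1"]) (auto intro!: derivative_eq_intros)
    qed
  qed
  hence "inner p0 k \<ge> T" by (simp add: k_def inner_diff_right)
  hence "k \<noteq> 0" using T0 by auto
  thus ?thesis using kZ vb by blast
qed

theorem propositionA1:
  fixes U V :: "(real \<times> real) set"
  assumes "star_shaped_smooth_domain U"
    and "star_shaped_smooth_domain V"
    and "U \<subseteq> V"
    and "convex V"
  shows "sys U \<le> sys V"
  unfolding sys_def
proof (rule cInf_mono)
  have cV: "compact V" and iV: "0 \<in> interior V" using assms(2) unfolding star_shaped_smooth_domain_def by blast+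
  have cU: "compact U" and iU: "0 \<in> interior U" using assms(1) unfolding star_shaped_smooth_domain_def by blast+
  define k1 :: "real \<times> real" where "k1 = (1, 0)"
  have k1Z: "k1 \<in> \<int> \<times> \<int>" and k10: "k1 \<noteq> 0" by (auto simp: k1_def zero_prod_def)
  obtain u0 \<gamma> where "closed_reeb_orbit V (inner u0 k1) \<gamma>"
    using orbit_exists[OF cV iV k1Z k10] by blast
  thus "{T. \<exists>\<gamma>. closed_reeb_orbit V T \<gamma>} \<noteq> {}" by blast
  show "bdd_below {T. \<exists>\<gamma>. closed_reeb_orbit U T \<gamma>}"
    by (rule bdd_belowI[of _ 0]) (auto simp: closed_reeb_orbit_def)
  fix b assume "b \<in> {T. \<exists>\<gamma>. closed_reeb_orbit V T \<gamma>}"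
  then obtain \<gamma> where "closed_reeb_orbit V b \<gamma>" by blast
  then obtain k where kZ: "k \<in> \<int> \<times> \<int>" and k0: "k \<noteq> 0" and kb: "\<forall>v\<in>V. inner v k \<le> b"
    using period_bound[OF assms(2) assms(4)] by blast
  obtain u0 \<gamma>' where u0: "u0 \<in> U" and orbU: "closed_reeb_orbit U (inner u0 k) \<gamma>'"
    using orbit_exists[OF cU iU kZ k0] by blast
  have "inner u0 k \<le> b" using kb u0 assms(3) by blast
  thus "\<exists>a\<in>{T. \<exists>\<gamma>. closed_reeb_orbit U T \<gamma>}. a \<le> b" using orbU by blast
qed

end
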